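(* On $\hat N^{\bullet}_*=\bigcup_{n\ge1}\hat N^n$, with $+_{\nearrow}:=\nearrow$ and $+_{\nwarrow}:=\nwarrow$, the operation $\tilde\ltimes$ and the involution $\dagger$: (i) $\tilde\ltimes$ maps $\hat N^n\times\hat N^m$ into $\hat N^{nm}$, is associative, and is left distributive: $(\vec u+_{\nearrow}\vec v)\tilde\ltimes\vec w=(\vec u\tilde\ltimes\vec w)+_{\nearrow}(\vec v\tilde\ltimes\vec w)$ and $(\vec u+_{\nwarrow}\vec v)\tilde\ltimes\vec w=(\vec u\tilde\ltimes\vec w)+_{\nwarrow}(\vec v\tilde\ltimes\vec w)$; (ii) for all names $\vec u,\vec v$: $(\vec u+_{\nearrow}\vec v)^\dagger=\vec v^\dagger+_{\nwarrow}\vec u^\dagger$, $(\vec u+_{\nwarrow}\vec v)^\dagger=\vec v^\dagger+_{\nearrow}\vec u^\dagger$, and $(\vec u\tilde\ltimes\vec v)^\dagger=\vec u^\dagger\tilde\ltimes\vec v^\dagger$.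
   Context: $\hat N^n$ ($n\ge1$) is the set of names of planar rooted binary trees with $n$ internal vertices and $\hat N^0=\{()\}$ (the empty vector, name of the trivial tree). Equivalently, recursively: every element of $\hat N^n$, $n\ge1$, is uniquely of the form $\vec v_l\vee\vec v_r:=(\vec v_l,1,p+1+\vec v_r)$ with $\vec v_l\in\hat N^p$, $\vec v_r\in\hat N^q$, $p+q+1=n$, where $k+(w_1,\dots,w_q)=(w_1+k,\dots,w_q+k)$. For $\vec v\in\hat N^n,\vec w\in\hat N^m$: $\vec v\nearrow\vec w=(\vec v,n\triangleright w_1,\dots,n\triangleright w_m)$ with $n\triangleright a=a+n$ for $a\ne1$, $n\triangleright1=1$; $\vec v\nwarrow\vec w=(\vec v,n+\vec w)$; the empty vector $()$ is a two-sided unit for both. These satisfy $\vec v_l\vee\vec v_r=\vec v_l\nearrow(1)\nwarrow\vec v_r$. Universal expression: for a name $\vec v$ and a name $\vec x$ of degree $\ge1$, $\varpi_{()}(\vec x)=()$ and $\varpi_{\vec v}(\vec x)=\varpi_{\vec v_l}(\vec x)\nearrow\vec x\nwarrow\varpi_{\vec v_r}(\vec x)$ for $\vec v=\vec v_l\vee\vec v_r$. $L$-multiplication: $\vec u\tilde\ltimes\vec v:=\varpi_{\vec u}(\vec v)$. Dendriform involution: $()^\dagger=()$ and $(\vec v\vee\vec w)^\dagger=\vec w^\dagger\vee\vec v^\dagger$. *)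

theory Defs
  imports Main
begin

datatype btree = Leaf | Node btree btree

fun nodes :: "btree \<Rightarrow> nat" where
  "nodes Leaf = 0"
| "nodes (Node l r) = nodes l + nodes r + 1"

definition vee :: "nat list \<Rightarrow> nat list \<Rightarrow> nat list" where
  "vee v w = v @ [1] @ map (\<lambda>a. a + (length v + 1)) w"

fun name :: "btree \<Rightarrow> nat list" where
  "name Leaf = []"
| "name (Node l r) = vee (name l) (name r)"

definition hatN :: "nat \<Rightarrow> nat list set" where
  "hatN n = {name t | t. nodes t = n}"

definition Names :: "nat list set" where
  "Names = (\<Union>n. hatN n)"

definition NamesPos :: "nat list set" where
  "NamesPos = (\<Union>n\<in>{1..}. hatN n)"

definition tree_of :: "nat list \<Rightarrow> btree" where
  "tree_of v = (THE t. name t = v)"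

definition tri :: "nat \<Rightarrow> nat \<Rightarrow> nat" where
  "tri n a = (if a = 1 then 1 else a + n)"

definition nearrow :: "nat list \<Rightarrow> nat list \<Rightarrow> nat list" where
  "nearrow v w = v @ map (tri (length v)) w"

definition nwarrow :: "nat list \<Rightarrow> nat list \<Rightarrow> nat list" where
  "nwarrow v w = v @ map (\<lambda>a. a + length v) w"

fun varpi_t :: "btree \<Rightarrow> nat list \<Rightarrow> nat list" where
  "varpi_t Leaf x = []"
| "varpi_t (Node l r) x = nwarrow (nearrow (varpi_t l x) x) (varpi_t r x)"

definition varpi :: "nat list \<Rightarrow> nat list \<Rightarrow> nat list" where
  "varpi v x = varpi_t (tree_of v) x"

definition ltimes :: "nat list \<Rightarrow> nat list \<Rightarrow> nat list" where
  "ltimes u v = varpi u v"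

text \<open>Dendriform involution: ()^dagger = (), (v \<or> w)^dagger = w^dagger \<or> v^dagger.\<close>
fun mirror :: "btree \<Rightarrow> btree" where
  "mirror Leaf = Leaf"
| "mirror (Node l r) = Node (mirror r) (mirror l)"

definition dagger :: "nat list \<Rightarrow> nat list" where
  "dagger v = name (mirror (tree_of v))"

end

theory Submission
  imports Defs
begin

fun gL :: "btree \<Rightarrow> btree \<Rightarrow> btree" where
  "gL a Leaf = a"
| "gL a (Node l r) = Node (gL a l) r"

fun gR :: "btree \<Rightarrow> btree \<Rightarrow> btree" where
  "gR Leaf b = b"
| "gR (Node l r) b = Node l (gR r b)"

fun sub :: "btree \<Rightarrow> btree \<Rightarrow> btree" where
  "sub Leaf c = Leaf"
| "sub (Node l r) c = gR (gL (sub l c) c) (sub r c)"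

lemma len_name: "length (name t) = nodes t"
  by (induction t) (auto simp: vee_def)

lemma name_pos: "x \<in> set (name t) \<Longrightarrow> x \<ge> 1"
  by (induction t arbitrary: x) (auto simp: vee_def)

lemma split_uniq: "v1 @ x # ys1 = v2 @ x # ys2 \<Longrightarrow> x \<notin> set ys1 \<Longrightarrow> x \<notin> set ys2
   \<Longrightarrow> v1 = v2 \<and> ys1 = ys2"
proof (induction v1 arbitrary: v2)
  case Nil
  then show ?case by (cases v2) auto
next
  case (Cons a v1)
  then show ?case by (cases v2) auto
qed

lemma name_inj: "name s = name t \<Longrightarrow> s = t"
proof (induction s arbitrary: t)
  case Leaf
  then show ?case by (cases t) (auto simp: vee_def)
next
  case (Node l r)
  show ?case
  proof (cases t)
    case Leaf
    then show ?thesis using Node by (auto simp: vee_def)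
  next
    case (Node l2 r2)
    have e: "name l @ 1 # map (\<lambda>a. a + (length (name l) + 1)) (name r)
           = name l2 @ 1 # map (\<lambda>a. a + (length (name l2) + 1)) (name r2)"
      using Node.prems Node by (simp add: vee_def)
    have n1: "1 \<notin> set (map (\<lambda>a. a + (length (name l) + 1)) (name r))" by (auto dest: name_pos)
    have n2: "1 \<notin> set (map (\<lambda>a. a + (length (name l2) + 1)) (name r2))" by (auto dest: name_pos)
    from split_uniq[OF e n1 n2] have "name l = name l2"
      and m: "map (\<lambda>a. a + (length (name l) + 1)) (name r) = map (\<lambda>a. a + (length (name l2) + 1)) (name r2)"
      by auto
    moreover have "name r = name r2"
    proof -
      have i: "inj (\<lambda>a::nat. a + (length (name l) + 1))" by (simp add: inj_def)
      have "map (\<lambda>a. a + (length (name l) + 1)) (name r) = map (\<lambda>a. a + (length (name l) + 1)) (name r2)"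
        using m \<open>name l = name l2\<close> by simp
      then show ?thesis using inj_map_eq_map[OF i] by blast
    qed
    ultimately show ?thesis using Node Node.IH by auto
  qed
qed

lemma tree_of_name[simp]: "tree_of (name t) = t"
  unfolding tree_of_def using name_inj by blast

lemma nodes_gL[simp]: "nodes (gL a b) = nodes a + nodes b"
  by (induction b) auto

lemma nodes_gR[simp]: "nodes (gR a b) = nodes a + nodes b"
  by (induction a) auto

lemma nearrow_name: "nearrow (name a) (name b) = name (gL a b)"
proof (induction b)
  case Leaf
  then show ?case by (simp add: nearrow_def)
next
  case (Node l r)
  have h: "map (tri (length (name a))) (map (\<lambda>x. x + (length (name l) + 1)) (name r))
        = map (\<lambda>x. x + (length (name (gL a l)) + 1)) (name r)"
    using name_pos[of _ r] by (auto simp: tri_def len_name)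
  have "nearrow (name a) (name (Node l r)) = (name a @ map (tri (length (name a))) (name l)) @ [1] @
      map (tri (length (name a))) (map (\<lambda>x. x + (length (name l) + 1)) (name r))"
    by (simp add: nearrow_def vee_def tri_def)
  also have "\<dots> = name (gL a (Node l r))"
    using Node h by (simp add: nearrow_def vee_def)
  finally show ?case .
qed

lemma nwarrow_name: "nwarrow (name a) (name b) = name (gR a b)"
proof (induction a)
  case Leaf
  then show ?case by (simp add: nwarrow_def)
next
  case (Node l r)
  have "name (gR (Node l r) b) = vee (name l) (name (gR r b))" by simp
  also have "\<dots> = vee (name l) (name r @ map (\<lambda>a. a + length (name r)) (name b))"
    using Node(2) by (simp add: nwarrow_def)
  finally show ?case by (simp add: nwarrow_def vee_def len_name algebra_simps)
qed

lemma varpi_name: "varpi_t a (name b) = name (sub a b)"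
  by (induction a) (auto simp: nearrow_name nwarrow_name)

lemma ltimes_name: "ltimes (name a) (name b) = name (sub a b)"
  by (simp add: ltimes_def varpi_def varpi_name)

lemma nodes_sub: "nodes (sub a b) = nodes a * nodes b"
  by (induction a) (auto simp: algebra_simps)

lemma gL_assoc: "gL (gL a b) c = gL a (gL b c)"
  by (induction c) auto

lemma gR_assoc: "gR (gR a b) c = gR a (gR b c)"
  by (induction a) auto

lemma gL_gR: "b \<noteq> Leaf \<Longrightarrow> gL a (gR b c) = gR (gL a b) c"
  by (cases b) auto

lemma gL_Leaf_iff: "gL a c = Leaf \<longleftrightarrow> a = Leaf \<and> c = Leaf"
  by (cases c) auto

lemma sub_gL: "c \<noteq> Leaf \<Longrightarrow> sub (gL x y) c = gL (sub x c) (sub y c)"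
  by (induction y) (auto simp: gL_assoc gL_gR gL_Leaf_iff)

lemma sub_gR: "sub (gR x y) c = gR (sub x c) (sub y c)"
  by (induction x) (auto simp: gR_assoc)

lemma sub_assoc: "c \<noteq> Leaf \<Longrightarrow> sub (sub a b) c = sub a (sub b c)"
  by (induction a) (auto simp: sub_gL sub_gR)

lemma mirror_gL: "mirror (gL a b) = gR (mirror b) (mirror a)"
  by (induction b) auto

lemma mirror_gR: "mirror (gR a b) = gL (mirror b) (mirror a)"
  by (induction a) auto

lemma sub_Leaf: "sub a Leaf = Leaf"
  by (induction a) auto

lemma mirror_Leaf_iff: "mirror b = Leaf \<longleftrightarrow> b = Leaf"
  by (cases b) auto

lemma mirror_sub: "mirror (sub a b) = sub (mirror a) (mirror b)"
proof (cases "b = Leaf")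
  case True
  then show ?thesis by (simp add: sub_Leaf)
next
  case False
  then show ?thesis
    by (induction a) (auto simp: mirror_gL mirror_gR gL_gR mirror_Leaf_iff)
qed

lemma dagger_name: "dagger (name a) = name (mirror a)"
  by (simp add: dagger_def)

lemma Names_E: "u \<in> Names \<Longrightarrow> \<exists>a. u = name a"
  by (auto simp: Names_def hatN_def)

lemma NamesPos_E: "u \<in> NamesPos \<Longrightarrow> \<exists>a. u = name a \<and> a \<noteq> Leaf"
  by (auto simp: NamesPos_def hatN_def)

theorem mainTheorem8:
  shows "(\<forall>n m u v. n \<ge> 1 \<longrightarrow> m \<ge> 1 \<longrightarrow> u \<in> hatN n \<longrightarrow> v \<in> hatN m
            \<longrightarrow> ltimes u v \<in> hatN (n * m))
    \<and> (\<forall>u\<in>NamesPos. \<forall>v\<in>NamesPos. \<forall>w\<in>NamesPos.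
            ltimes (ltimes u v) w = ltimes u (ltimes v w))
    \<and> (\<forall>u\<in>NamesPos. \<forall>v\<in>NamesPos. \<forall>w\<in>NamesPos.
            ltimes (nearrow u v) w = nearrow (ltimes u w) (ltimes v w)
          \<and> ltimes (nwarrow u v) w = nwarrow (ltimes u w) (ltimes v w))
    \<and> (\<forall>u\<in>Names. \<forall>v\<in>Names.
            dagger (nearrow u v) = nwarrow (dagger v) (dagger u)
          \<and> dagger (nwarrow u v) = nearrow (dagger v) (dagger u)
          \<and> dagger (ltimes u v) = ltimes (dagger u) (dagger v))"
proof (intro conjI allI impI ballI)
  fix n m u v assume "u \<in> hatN n" "v \<in> hatN m"
  then show "ltimes u v \<in> hatN (n * m)"
    by (auto simp: hatN_def ltimes_name nodes_sub)
next
  fix u v w assume "u \<in> NamesPos" "v \<in> NamesPos" "w \<in> NamesPos"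
  then show "ltimes (ltimes u v) w = ltimes u (ltimes v w)"
    by (auto dest!: NamesPos_E simp: ltimes_name sub_assoc)
next
  fix u v w assume "u \<in> NamesPos" "v \<in> NamesPos" "w \<in> NamesPos"
  then show "ltimes (nearrow u v) w = nearrow (ltimes u w) (ltimes v w)"
    by (auto dest!: NamesPos_E simp: ltimes_name nearrow_name sub_gL)
next
  fix u v w assume "u \<in> NamesPos" "v \<in> NamesPos" "w \<in> NamesPos"
  then show "ltimes (nwarrow u v) w = nwarrow (ltimes u w) (ltimes v w)"
    by (auto dest!: NamesPos_E simp: ltimes_name nwarrow_name sub_gR)
next
  fix u v assume "u \<in> Names" "v \<in> Names"
  then show "dagger (nearrow u v) = nwarrow (dagger v) (dagger u)"
    by (auto dest!: Names_E simp: dagger_name nearrow_name nwarrow_name mirror_gL)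
next
  fix u v assume "u \<in> Names" "v \<in> Names"
  then show "dagger (nwarrow u v) = nearrow (dagger v) (dagger u)"
    by (auto dest!: Names_E simp: dagger_name nearrow_name nwarrow_name mirror_gR)
next
  fix u v assume "u \<in> Names" "v \<in> Names"
  then show "dagger (ltimes u v) = ltimes (dagger u) (dagger v)"
    by (auto dest!: Names_E simp: dagger_name ltimes_name mirror_sub)
qed

end
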